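(* Let $\mu$ be a probability measure on $[0,\infty)$ with $\mu(\{0\})<1$, and let $p\in\mathbb N$. Then $m_p(\mu)=\int_{[0,\infty)}x^p\,\mu(dx)<\infty$ if and only if there exist real numbers $r_1,\dots,r_p$ such that $$\frac1x K_\mu(-x)=-r_1+r_2x+\dots+(-1)^p r_p x^{p-1}+o(x^{p-1})\quad\text{as } x\downarrow 0,\ x>0.$$
   Context: For a probability measure $\mu$ on $[0,\infty)$ with $\mu(\{0\})<1$, define $\psi_\mu(z)=\int_{[0,\infty)}\frac{z\xi}{1-z\xi}\,\mu(d\xi)$ for $z\in\mathbb C\setminus[0,\infty)$, and $K_\mu(z)=\psi_\mu(z)/(1+\psi_\mu(z))$. *)

theory Defs
  imports "HOL-Probability.Probability" "HOL-Library.Landau_Symbols"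
begin

text \<open>A probability measure on [0,\<infinity>) is modelled as a probability measure M on the
Borel sets of the reals that is concentrated on [0,\<infinity>).\<close>

definition psi_mu :: "real measure \<Rightarrow> complex \<Rightarrow> complex" where
  "psi_mu M z = (\<integral>\<xi>. z * complex_of_real \<xi> / (1 - z * complex_of_real \<xi>) \<partial>M)"

definition K_mu :: "real measure \<Rightarrow> complex \<Rightarrow> complex" where
  "K_mu M z = psi_mu M z / (1 + psi_mu M z)"

definition moment :: "real measure \<Rightarrow> nat \<Rightarrow> ennreal" where
  "moment M p = (\<integral>\<^sup>+ x. ennreal (x ^ p) \<partial>M)"

end

theory Submission
  imports Defs "HOL-Computational_Algebra.Polynomial"
begin

abbreviation "F0 \<equiv> at_right (0::real)"

lemma pow_bigo_mono: "m \<le> n \<Longrightarrow> (\<lambda>x::real. x^n) \<in> O[F0](\<lambda>x. x^m)"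
proof (rule bigoI[of _ 1])
  assume "m \<le> n"
  have "eventually (\<lambda>x::real. x \<in> {0<..<1}) F0"
    by (rule eventually_at_right_real) simp
  thus "eventually (\<lambda>x::real. norm (x^n) \<le> 1 * norm (x^m)) F0"
  proof eventually_elim
    case (elim x)
    then show ?case using power_decreasing[OF \<open>m \<le> n\<close>, of x] by simp
  qed
qed

lemma pow_smallo_Suc: "(\<lambda>x::real. x^Suc n) \<in> o[F0](\<lambda>x. x^n)"
proof (rule smalloI_tendsto)
  have "eventually (\<lambda>x::real. x^Suc n / x^n = x) F0"
    using eventually_at_right_less[of 0] by eventually_elim auto
  moreover have "((\<lambda>x::real. x) \<longlongrightarrow> 0) F0" by (intro tendsto_intros)
  ultimately show "((\<lambda>x::real. x^Suc n / x^n) \<longlongrightarrow> 0) F0"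
    using tendsto_cong by fastforce
  show "eventually (\<lambda>x::real. x^n \<noteq> 0) F0"
    using eventually_at_right_less[of 0] by eventually_elim auto
qed

lemma small_mono: "m \<le> n \<Longrightarrow> f \<in> o[F0](\<lambda>x. x^n) \<Longrightarrow> f \<in> o[F0](\<lambda>x::real. x^m)"
  using landau_o.small_big_trans pow_bigo_mono by blast

lemma tendsto_bigo1: "(g \<longlongrightarrow> (c::real)) F0 \<Longrightarrow> g \<in> O[F0](\<lambda>_. 1)"
  by (rule bigoI_tendsto[where c=c]) auto

definition E :: "nat \<Rightarrow> (real \<Rightarrow> real) \<Rightarrow> bool" where
  "E n h \<longleftrightarrow> (\<exists>q. (\<lambda>x. h x - poly q x) \<in> o[F0](\<lambda>x. x^n))"

lemma E_poly: "E n (poly q)"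
  unfolding E_def by (intro exI[of _ q]) simp

lemma E_small: "h \<in> o[F0](\<lambda>x. x^n) \<Longrightarrow> E n h"
  unfolding E_def by (intro exI[of _ 0]) simp

lemma E_cong: "eventually (\<lambda>x. h x = g x) F0 \<Longrightarrow> E n h \<Longrightarrow> E n g"
  unfolding E_def
proof (elim exE, intro exI)
  fix q assume ev: "eventually (\<lambda>x. h x = g x) F0" and q: "(\<lambda>x. h x - poly q x) \<in> o[F0](\<lambda>x. x ^ n)"
  have "eventually (\<lambda>x. h x - poly q x = g x - poly q x) F0" using ev by eventually_elim simp
  from landau_o.small.in_cong[OF this] q show "(\<lambda>x. g x - poly q x) \<in> o[F0](\<lambda>x. x ^ n)" by simp
qed

lemma E_mono: "m \<le> n \<Longrightarrow> E n h \<Longrightarrow> E m h"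
  unfolding E_def using small_mono by blast

lemma E_add: "E n f \<Longrightarrow> E n g \<Longrightarrow> E n (\<lambda>x. f x + g x)"
  unfolding E_def
proof (elim exE)
  fix q r assume q: "(\<lambda>x. f x - poly q x) \<in> o[F0](\<lambda>x. x ^ n)" and r: "(\<lambda>x. g x - poly r x) \<in> o[F0](\<lambda>x. x ^ n)"
  have "(\<lambda>x. (f x - poly q x) + (g x - poly r x)) \<in> o[F0](\<lambda>x. x ^ n)" by (rule sum_in_smallo(1)[OF q r])
  thus "\<exists>s. (\<lambda>x. f x + g x - poly s x) \<in> o[F0](\<lambda>x. x ^ n)"
    by (intro exI[of _ "q + r"]) (simp add: algebra_simps)
qed

lemma E_neg: "E n f \<Longrightarrow> E n (\<lambda>x. - f x)"
  unfolding E_def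
proof (elim exE)
  fix q assume q: "(\<lambda>x. f x - poly q x) \<in> o[F0](\<lambda>x. x ^ n)"
  have e: "(\<lambda>x. - f x - poly (-q) x) = (\<lambda>x. - (f x - poly q x))" by (auto simp: fun_eq_iff)
  show "\<exists>s. (\<lambda>x. - f x - poly s x) \<in> o[F0](\<lambda>x. x ^ n)"
    by (intro exI[of _ "- q"], subst e, subst landau_o.small.uminus_in_iff, rule q)
qed

lemma E_diff: "E n f \<Longrightarrow> E n g \<Longrightarrow> E n (\<lambda>x. f x - g x)"
  using E_add[OF _ E_neg[of n g], of f] by simp

lemma E_bounded: "E n h \<Longrightarrow> h \<in> O[F0](\<lambda>_. 1)"
  unfolding E_def
proof (elim exE)
  fix q assume q: "(\<lambda>x. h x - poly q x) \<in> o[F0](\<lambda>x. x ^ n)"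
  have "(\<lambda>x::real. x^n) \<in> O[F0](\<lambda>x. x^0)" by (rule pow_bigo_mono) simp
  have "(\<lambda>x. h x - poly q x) \<in> O[F0](\<lambda>x. x^n)" by (rule landau_o.small_imp_big[OF q])
  from landau_o.big_trans[OF this \<open>(\<lambda>x::real. x^n) \<in> O[F0](\<lambda>x. x^0)\<close>]
  have 1: "(\<lambda>x. h x - poly q x) \<in> O[F0](\<lambda>_. 1)" by simp
  have 2: "poly q \<in> O[F0](\<lambda>_. 1)"
    proof (rule tendsto_bigo1[where c="poly q 0"])
    show "(poly q \<longlongrightarrow> poly q 0) F0"
      by (rule tendsto_within_subset[OF _ subset_UNIV]) (simp add: isCont_def[symmetric])
  qed
  show ?thesis using sum_in_bigo(1)[OF 1 2] by simp
qed


lemma E_mult: "E n f \<Longrightarrow> E n g \<Longrightarrow> E n (\<lambda>x. f x * g x)"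
proof -
  assume Ef: "E n f" and Eg: "E n g"
  have gb: "g \<in> O[F0](\<lambda>_. 1)" by (rule E_bounded[OF Eg])
  from Ef Eg obtain q r where q: "(\<lambda>x. f x - poly q x) \<in> o[F0](\<lambda>x. x ^ n)"
    and r: "(\<lambda>x. g x - poly r x) \<in> o[F0](\<lambda>x. x ^ n)" unfolding E_def by blast
  have qb: "poly q \<in> O[F0](\<lambda>_. 1)" by (rule E_bounded[OF E_poly])
  have 1: "(\<lambda>x. (f x - poly q x) * g x) \<in> o[F0](\<lambda>x. x ^ n)"
    using landau_o.small_big_mult[OF q gb] by simp
  have 2: "(\<lambda>x. poly q x * (g x - poly r x)) \<in> o[F0](\<lambda>x. x ^ n)"
    using landau_o.big_small_mult[OF qb r] by simp
  have "(\<lambda>x. f x * g x - poly (q * r) x) \<in> o[F0](\<lambda>x. x ^ n)"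
    using sum_in_smallo(1)[OF 1 2] by (simp add: algebra_simps)
  thus ?thesis unfolding E_def by blast
qed

lemma E_const: "E n (\<lambda>_. c)"
proof -
  have "poly [:c:] = (\<lambda>_. c)" by (simp add: fun_eq_iff)
  thus ?thesis using E_poly[of n "[:c:]"] by simp
qed

lemma E_pow: "E n f \<Longrightarrow> E n (\<lambda>x. f x ^ k)"
  by (induction k) (simp_all add: E_const E_mult)

lemma E_sum: "(\<And>i. i \<in> A \<Longrightarrow> E n (f i)) \<Longrightarrow> E n (\<lambda>x. \<Sum>i\<in>A. f i x)"
  by (induction A rule: infinite_finite_induct) (simp_all add: E_const E_add)

lemma E_xmult: "E n h \<Longrightarrow> E (Suc n) (\<lambda>x. x * h x)"
  unfolding E_def
proof (elim exE)
  fix q assume q: "(\<lambda>x. h x - poly q x) \<in> o[F0](\<lambda>x. x ^ n)"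
  have "(\<lambda>x. x * (h x - poly q x)) \<in> o[F0](\<lambda>x. x * x ^ n)"
    by (rule landau_o.small.mult_left[OF q])
  thus "\<exists>s. (\<lambda>x. x * h x - poly s x) \<in> o[F0](\<lambda>x. x ^ Suc n)"
    by (intro exI[of _ "pCons 0 q"]) (simp add: algebra_simps)
qed

lemma E_geom:
  assumes Eu: "E n u" and ub: "u \<in> O[F0](\<lambda>x. x)" and ul: "(u \<longlongrightarrow> 0) F0"
  shows "E n (\<lambda>x. 1 / (1 - u x))"
proof -
  have ES: "E n (\<lambda>x. \<Sum>k<Suc n. u x ^ k)" by (intro E_sum E_pow Eu)
  have "eventually (\<lambda>x. dist (u x) 0 < 1) F0" using ul by (rule tendstoD) simp
  hence ev1: "eventually (\<lambda>x. u x \<noteq> 1) F0" by eventually_elim auto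
  have lim: "((\<lambda>x. 1 / (1 - u x)) \<longlongrightarrow> 1 / (1 - 0)) F0"
    by (intro tendsto_intros ul) simp
  have b: "(\<lambda>x. 1 / (1 - u x)) \<in> O[F0](\<lambda>_. 1)" using tendsto_bigo1[OF lim] .
  have "(\<lambda>x. u x ^ Suc n) \<in> O[F0](\<lambda>x. x ^ Suc n)" by (rule landau_o.big_power[OF ub])
  hence "(\<lambda>x. u x ^ Suc n) \<in> o[F0](\<lambda>x. x ^ n)"
    using landau_o.big_small_trans pow_smallo_Suc by blast
  from landau_o.small_big_mult[OF this b]
  have R: "(\<lambda>x. u x ^ Suc n * (1 / (1 - u x))) \<in> o[F0](\<lambda>x. x ^ n)" by simp
  have "E n (\<lambda>x. (\<Sum>k<Suc n. u x ^ k) + u x ^ Suc n * (1 / (1 - u x)))"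
    by (rule E_add[OF ES E_small[OF R]])
  moreover have "eventually (\<lambda>x. (\<Sum>k<Suc n. u x ^ k) + u x ^ Suc n * (1 / (1 - u x)) = 1 / (1 - u x)) F0"
    using ev1
  proof eventually_elim
    case (elim x)
    hence "1 - u x \<noteq> 0" by simp
    thus ?case by (simp add: sum_gp_strict elim field_simps)
  qed
  ultimately show ?thesis by (rule E_cong[rotated])
qed

lemma E_transform:
  assumes EG: "E n G"
  shows "E n (\<lambda>x. - G x / (1 - x * G x))"
proof -
  have Gb: "G \<in> O[F0](\<lambda>_. 1)" by (rule E_bounded[OF EG])
  have Eu: "E n (\<lambda>x. x * G x)" by (rule E_mono[OF _ E_xmult[OF EG]]) simp
  have ub: "(\<lambda>x. x * G x) \<in> O[F0](\<lambda>x. x)"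
    using landau_o.big.mult_left[OF Gb, of "\<lambda>x. x"] by simp
  from ub obtain c where c: "c > 0" "eventually (\<lambda>x. norm (x * G x) \<le> c * norm x) F0"
    by (elim landau_o.bigE)
  have ul: "((\<lambda>x. x * G x) \<longlongrightarrow> 0) F0"
  proof (rule Lim_null_comparison[OF c(2)])
    show "((\<lambda>x. c * norm x) \<longlongrightarrow> 0) F0"
    proof -
      have "((\<lambda>x::real. x) \<longlongrightarrow> 0) F0" by (rule tendsto_ident_at)
      from tendsto_mult[OF tendsto_const[of c] tendsto_norm[OF this]] show ?thesis by simp
    qed
  qed
  have "E n (\<lambda>x. - G x * (1 / (1 - x * G x)))"
    by (rule E_mult[OF E_neg[OF EG] E_geom[OF Eu ub ul]])
  thus ?thesis by (rule E_cong[rotated]) simp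
qed

lemma o1_coeff0: "poly T \<in> o[F0](\<lambda>_. 1) \<Longrightarrow> coeff T 0 = 0"
proof -
  assume a: "poly T \<in> o[F0](\<lambda>_. 1)"
  have l1: "((\<lambda>x. poly T x / 1) \<longlongrightarrow> 0) F0" by (rule smalloD_tendsto[OF a])
  have l2: "(poly T \<longlongrightarrow> poly T 0) F0"
    by (rule tendsto_within_subset[OF _ subset_UNIV]) (simp add: isCont_def[symmetric])
  have "poly T 0 = 0" using tendsto_unique[OF _ l2] l1 by simp
  thus ?thesis by (simp add: poly_0_coeff_0)
qed

lemma poly_small_coeffs: "poly T \<in> o[F0](\<lambda>x. x^n) \<Longrightarrow> j \<le> n \<Longrightarrow> coeff T j = 0"
proof (induction n arbitrary: T j)
  case 0
  thus ?case using o1_coeff0[of T] by simp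
next
  case (Suc n)
  from small_mono[OF _ Suc.prems(1), of 0] have "coeff T 0 = 0" using o1_coeff0[of T] by simp
  obtain a T' where T: "T = pCons a T'" by (cases T)
  with \<open>coeff T 0 = 0\<close> have a0: "a = 0" by simp
  have "(\<lambda>x. x * poly T' x) \<in> o[F0](\<lambda>x. x * x^n)" using Suc.prems(1) T a0 by simp
  moreover have "eventually (\<lambda>x::real. x \<noteq> 0) F0" by (simp add: eventually_at_right_less eventually_mono[OF eventually_at_right_less[of 0]])
  ultimately have "poly T' \<in> o[F0](\<lambda>x. x^n)"
    using landau_o.small.mult_cancel_left[of "\<lambda>x. x" F0 "\<lambda>x. x"] by simp
  show ?case
  proof (cases j)
    case 0 thus ?thesis using \<open>coeff T 0 = 0\<close> by simp
  next
    case (Suc j')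
    thus ?thesis using Suc.IH[OF \<open>poly T' \<in> _\<close>, of j'] Suc.prems(2) T by simp
  qed
qed

lemma poly_shift: "\<exists>s. \<forall>x::real. poly q x = (\<Sum>j<n. coeff q j * x^j) + x^n * poly s x"
proof (induction n arbitrary: q)
  case 0 show ?case by (intro exI[of _ q]) simp
next
  case (Suc n)
  obtain a q' where q: "q = pCons a q'" by (cases q)
  from Suc.IH[of q'] obtain s where s: "\<forall>x::real. poly q' x = (\<Sum>j<n. coeff q' j * x^j) + x^n * poly s x" by blast
  show ?case
  proof (intro exI allI)
    fix x :: real
    have "poly q x = a + x * poly q' x" using q by simp
    also have "\<dots> = a + (\<Sum>j<n. coeff q' j * x^Suc j) + x^Suc n * poly s x"
      using s by (simp add: algebra_simps sum_distrib_left)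
    also have "\<dots> = (\<Sum>j<Suc n. coeff q j * x^j) + x^Suc n * poly s x"
      by (subst sum.lessThan_Suc_shift) (simp add: q)
    finally show "poly q x = (\<Sum>j<Suc n. coeff q j * x^j) + x^Suc n * poly s x" .
  qed
qed



definition Ci :: "real measure \<Rightarrow> nat \<Rightarrow> real \<Rightarrow> real" where
  "Ci M j x = (\<integral>\<xi>. \<xi>^j / (1 + x * \<xi>) \<partial>M)"

definition mom :: "real measure \<Rightarrow> nat \<Rightarrow> real" where
  "mom M k = (\<integral>\<xi>. \<xi>^k \<partial>M)"

lemma bnd1: "0 \<le> (\<xi>::real) \<Longrightarrow> 0 < x \<Longrightarrow> \<xi>^Suc k / (1 + x*\<xi>) \<le> \<xi>^k / x"
proof -
  assume a: "0 \<le> \<xi>" "0 < x"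
  have pos: "0 < 1 + x*\<xi>" using a by (simp add: add_pos_nonneg)
  have h: "\<xi>^Suc k * x \<le> \<xi>^k * (1 + x*\<xi>)" using a by (simp add: algebra_simps)
  show ?thesis using h pos a by (simp add: divide_simps algebra_simps)
qed

lemma bnd2: "0 \<le> (\<xi>::real) \<Longrightarrow> 0 \<le> x \<Longrightarrow> \<xi>^k / (1 + x*\<xi>) \<le> \<xi>^k"
proof -
  assume a: "0 \<le> \<xi>" "0 \<le> x"
  have pos: "0 < 1 + x*\<xi>" using a by (simp add: add_pos_nonneg)
  have h: "\<xi>^k * 1 \<le> \<xi>^k * (1 + x*\<xi>)" using a by (intro mult_left_mono) simp_all
  show ?thesis using h pos a by (simp add: divide_simps algebra_simps)
qed

lemma bnd3: "0 \<le> (\<xi>::real) \<Longrightarrow> k \<le> p \<Longrightarrow> \<xi>^k \<le> 1 + \<xi>^p"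
proof (cases "\<xi> \<le> 1")
  case True
  assume "0 \<le> \<xi>" "k \<le> p"
  hence "\<xi>^k \<le> 1" using True by (simp add: power_le_one)
  thus ?thesis using zero_le_power[of \<xi> p] \<open>0 \<le> \<xi>\<close> by linarith
next
  case False
  assume "0 \<le> \<xi>" "k \<le> p"
  hence "\<xi>^k \<le> \<xi>^p" using False by (intro power_increasing) auto
  thus ?thesis by simp
qed

context
  fixes M :: "real measure"
  assumes P: "prob_space M" and S: "sets M = sets borel" and N: "AE x in M. 0 \<le> x"
begin

lemma meas: "f \<in> borel_measurable borel \<Longrightarrow> f \<in> borel_measurable M"
  by (subst measurable_cong_sets[OF S refl])

lemma meas_frac: "(\<lambda>\<xi>::real. \<xi>^j / (1 + x * \<xi>)) \<in> borel_measurable M"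
  by (rule meas) measurable

lemma meas_pow: "(\<lambda>\<xi>::real. \<xi>^j) \<in> borel_measurable M"
  by (rule meas) measurable

lemma int_C: "0 < x \<Longrightarrow> integrable M (\<lambda>\<xi>. \<xi>^k) \<Longrightarrow> integrable M (\<lambda>\<xi>. \<xi>^Suc k / (1 + x*\<xi>))"
proof -
  assume x: "0 < x" and i: "integrable M (\<lambda>\<xi>. \<xi>^k)"
  show ?thesis
  proof (rule Bochner_Integration.integrable_bound[OF _ meas_frac])
    show "integrable M (\<lambda>\<xi>. \<xi>^k / x)" using i by simp
    show "AE \<xi> in M. norm (\<xi>^Suc k / (1 + x*\<xi>)) \<le> norm (\<xi>^k / x)"
      using N
    proof eventually_elim
      case (elim \<xi>)
      thus ?case using bnd1[OF elim x, of k] x by simp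
    qed
  qed
qed

lemma int_pow_le: "integrable M (\<lambda>\<xi>. \<xi>^p) \<Longrightarrow> k \<le> p \<Longrightarrow> integrable M (\<lambda>\<xi>. \<xi>^k)"
proof -
  assume i: "integrable M (\<lambda>\<xi>. \<xi>^p)" and k: "k \<le> p"
  interpret prob_space M by (rule P)
  show ?thesis
  proof (rule Bochner_Integration.integrable_bound[OF _ meas_pow])
    show "integrable M (\<lambda>\<xi>. 1 + \<xi>^p)" using i by simp
    show "AE \<xi> in M. norm (\<xi>^k) \<le> norm (1 + \<xi>^p)"
      using N
    proof eventually_elim
      case (elim \<xi>)
      thus ?case using bnd3[OF elim k] by simp
    qed
  qed
qed

lemma C_step:
  assumes x: "0 < x" and i1: "integrable M (\<lambda>\<xi>. \<xi>^Suc k)"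
  shows "Ci M (Suc k) x = mom M (Suc k) - x * Ci M (Suc (Suc k)) x"
proof -
  have i2: "integrable M (\<lambda>\<xi>. \<xi>^Suc (Suc k) / (1 + x*\<xi>))" by (rule int_C[OF x i1])
  have "Ci M (Suc k) x = (\<integral>\<xi>. \<xi>^Suc k - x * (\<xi>^Suc (Suc k) / (1 + x*\<xi>)) \<partial>M)"
    unfolding Ci_def
  proof (rule integral_cong_AE)
    show "AE \<xi> in M. \<xi>^Suc k / (1 + x*\<xi>) = \<xi>^Suc k - x * (\<xi>^Suc (Suc k) / (1 + x*\<xi>))"
      using N
    proof eventually_elim
      case (elim \<xi>)
      hence "1 + x*\<xi> \<noteq> 0" using x by (smt (verit) mult_nonneg_nonneg)
      thus ?case by (simp add: field_simps)
    qed
  qed (fact meas_frac, intro borel_measurable_diff borel_measurable_times borel_measurable_const meas_pow meas_frac)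
  also have "\<dots> = (\<integral>\<xi>. \<xi>^Suc k \<partial>M) - (\<integral>\<xi>. x * (\<xi>^Suc (Suc k) / (1 + x*\<xi>)) \<partial>M)"
    by (rule Bochner_Integration.integral_diff[OF i1 integrable_mult_right[OF i2]])
  also have "\<dots> = mom M (Suc k) - x * Ci M (Suc (Suc k)) x"
    unfolding Ci_def mom_def by (simp only: integral_mult_right_zero)
  finally show ?thesis .
qed

lemma C_expand:
  assumes x: "0 < x" and i: "\<forall>k\<le>n. integrable M (\<lambda>\<xi>. \<xi>^k)"
  shows "Ci M 1 x = (\<Sum>k<n. (-x)^k * mom M (Suc k)) + (-x)^n * Ci M (Suc n) x"
  using i
proof (induction n)
  case 0 thus ?case by simp
next
  case (Suc n)
  have "integrable M (\<lambda>\<xi>. \<xi>^Suc n)" using Suc.prems by blast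
  from C_step[OF x this]
  have "Ci M (Suc n) x = mom M (Suc n) - x * Ci M (Suc (Suc n)) x" .
  with Suc.IH Suc.prems show ?case by (simp add: algebra_simps)
qed

end


lemma dct_right:
  fixes s :: "real \<Rightarrow> 'a \<Rightarrow> real" and w f :: "'a \<Rightarrow> real"
  assumes fm: "f \<in> borel_measurable M" and sm: "\<And>t. s t \<in> borel_measurable M" and wi: "integrable M w"
   and lim: "AE \<xi> in M. ((\<lambda>t. s t \<xi>) \<longlongrightarrow> f \<xi>) F0"
   and bd: "\<forall>\<^sub>F t in F0. AE \<xi> in M. norm (s t \<xi>) \<le> w \<xi>"
  shows "((\<lambda>t. \<integral>\<xi>. s t \<xi> \<partial>M) \<longlongrightarrow> \<integral>\<xi>. f \<xi> \<partial>M) F0"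
proof -
  have "((\<lambda>t. \<integral>\<xi>. s (inverse t) \<xi> \<partial>M) \<longlongrightarrow> \<integral>\<xi>. f \<xi> \<partial>M) at_top"
  proof (rule integral_dominated_convergence_at_top[where w=w])
    show "f \<in> borel_measurable M" by (rule fm)
    show "\<And>t. s (inverse t) \<in> borel_measurable M" by (rule sm)
    show "integrable M w" by (rule wi)
    show "AE \<xi> in M. ((\<lambda>t. s (inverse t) \<xi>) \<longlongrightarrow> f \<xi>) at_top"
      using lim by eventually_elim (simp add: filterlim_at_top_to_right)
    show "\<forall>\<^sub>F t in at_top. AE \<xi> in M. norm (s (inverse t) \<xi>) \<le> w \<xi>"
      using bd by (simp add: eventually_at_top_to_right)
  qed
  thus ?thesis by (simp add: filterlim_at_top_to_right)
qed

lemma bound_from_E: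
  assumes EE: "E j (\<lambda>x. x^j * h x)"
    and sm: "j > 0 \<Longrightarrow> (\<lambda>x. x^j * h x) \<in> o[F0](\<lambda>x. x^(j-1))"
  shows "h \<in> O[F0](\<lambda>_. 1)"
proof -
  from EE obtain T where T: "(\<lambda>x. x^j * h x - poly T x) \<in> o[F0](\<lambda>x. x^j)" unfolding E_def by blast
  have cz: "\<forall>i<j. coeff T i = 0"
  proof (cases j)
    case 0 thus ?thesis by simp
  next
    case (Suc i)
    have a: "(\<lambda>x. x^j * h x - poly T x) \<in> o[F0](\<lambda>x. x^i)"
      using small_mono[OF _ T, of i] Suc by simp
    have b: "(\<lambda>x. x^j * h x) \<in> o[F0](\<lambda>x. x^i)" using sm Suc by simp
    have "(\<lambda>x. x^j * h x - (x^j * h x - poly T x)) \<in> o[F0](\<lambda>x. x^i)"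
      by (rule sum_in_smallo(2)[OF b a])
    hence "poly T \<in> o[F0](\<lambda>x. x^i)" by simp
    thus ?thesis using poly_small_coeffs Suc by auto
  qed
  obtain s where s: "\<forall>x::real. poly T x = (\<Sum>i<j. coeff T i * x^i) + x^j * poly s x"
    using poly_shift by blast
  have c: "(\<lambda>x. x^j * (h x - poly s x)) \<in> o[F0](\<lambda>x. x^j * 1)"
    using T s cz by (simp add: algebra_simps)
  have ev: "eventually (\<lambda>x::real. x^j \<noteq> 0) F0"
    using eventually_at_right_less[of 0] by eventually_elim simp
  have th: "(\<lambda>x::real. x^j) \<in> \<Theta>[F0](\<lambda>x. x^j)" by simp
  have "(\<lambda>x. h x - poly s x) \<in> o[F0](\<lambda>_. 1)"
    by (rule iffD1[OF landau_o.small.mult_cancel_left[OF th ev] c])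
  hence "E 0 h" unfolding E_def by auto
  thus ?thesis by (rule E_bounded)
qed

context
  fixes M :: "real measure"
  assumes P: "prob_space M" and S: "sets M = sets borel" and N: "AE x in M. 0 \<le> x"
begin

lemma lim_Cp: "integrable M (\<lambda>\<xi>. \<xi>^p) \<Longrightarrow> ((\<lambda>x. Ci M p x) \<longlongrightarrow> mom M p) F0"
  unfolding Ci_def mom_def
proof (rule dct_right[where w="\<lambda>\<xi>. \<xi>^p"])
  assume i: "integrable M (\<lambda>\<xi>. \<xi>^p)"
  show "integrable M (\<lambda>\<xi>. \<xi>^p)" by (rule i)
  show "(\<lambda>\<xi>. \<xi>^p) \<in> borel_measurable M" by (rule meas_pow[OF P S N])
  show "\<And>t. (\<lambda>\<xi>. \<xi>^p / (1 + t * \<xi>)) \<in> borel_measurable M" by (rule meas_frac[OF P S N])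
  show "AE \<xi> in M. ((\<lambda>t. \<xi>^p / (1 + t * \<xi>)) \<longlongrightarrow> \<xi>^p) F0"
  proof (rule AE_I2)
    fix \<xi> :: real
    have "((\<lambda>t. \<xi>^p / (1 + t * \<xi>)) \<longlongrightarrow> \<xi>^p / (1 + 0 * \<xi>)) F0"
      by (intro tendsto_intros tendsto_ident_at) simp
    thus "((\<lambda>t. \<xi>^p / (1 + t * \<xi>)) \<longlongrightarrow> \<xi>^p) F0" by simp
  qed
  show "\<forall>\<^sub>F t in F0. AE \<xi> in M. norm (\<xi>^p / (1 + t * \<xi>)) \<le> \<xi>^p"
    using eventually_at_right_less[of 0]
  proof eventually_elim
    case (elim t)
    show ?case using N
    proof eventually_elim
      case (elim \<xi>)
      have "0 < 1 + t*\<xi>" using elim \<open>0 < t\<close> by (simp add: add_pos_nonneg)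
      hence "norm (\<xi>^p / (1 + t * \<xi>)) = \<xi>^p / (1 + t * \<xi>)" using elim by simp
      also have "\<dots> \<le> \<xi>^p" by (rule bnd2) (use elim \<open>0 < t\<close> in auto)
      finally show ?case .
    qed
  qed
qed

lemma lim_xC: "integrable M (\<lambda>\<xi>. \<xi>^j) \<Longrightarrow> ((\<lambda>x. x * Ci M (Suc j) x) \<longlongrightarrow> 0) F0"
proof -
  assume i: "integrable M (\<lambda>\<xi>. \<xi>^j)"
  have eq: "(\<lambda>x. x * Ci M (Suc j) x) = (\<lambda>x. \<integral>\<xi>. x * (\<xi>^Suc j / (1 + x * \<xi>)) \<partial>M)"
    unfolding Ci_def by (simp only: integral_mult_right_zero)
  have "((\<lambda>x. \<integral>\<xi>. x * (\<xi>^Suc j / (1 + x * \<xi>)) \<partial>M) \<longlongrightarrow> \<integral>\<xi>. 0 \<partial>M) F0"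
  proof (rule dct_right[where w="\<lambda>\<xi>. \<xi>^j"])
    show "integrable M (\<lambda>\<xi>. \<xi>^j)" by (rule i)
    show "(\<lambda>\<xi>. 0::real) \<in> borel_measurable M" by simp
    show "\<And>t. (\<lambda>\<xi>. t * (\<xi>^Suc j / (1 + t * \<xi>))) \<in> borel_measurable M"
      by (intro borel_measurable_times borel_measurable_const meas_frac[OF P S N])
    show "AE \<xi> in M. ((\<lambda>t. t * (\<xi>^Suc j / (1 + t * \<xi>))) \<longlongrightarrow> 0) F0"
    proof (rule AE_I2)
      fix \<xi> :: real
      have "((\<lambda>t. t * (\<xi>^Suc j / (1 + t * \<xi>))) \<longlongrightarrow> 0 * (\<xi>^Suc j / (1 + 0 * \<xi>))) F0"
        by (intro tendsto_intros tendsto_ident_at) simp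
      thus "((\<lambda>t. t * (\<xi>^Suc j / (1 + t * \<xi>))) \<longlongrightarrow> 0) F0" by simp
    qed
    show "\<forall>\<^sub>F t in F0. AE \<xi> in M. norm (t * (\<xi>^Suc j / (1 + t * \<xi>))) \<le> \<xi>^j"
      using eventually_at_right_less[of 0]
    proof eventually_elim
      case (elim t)
      show ?case using N
      proof eventually_elim
        case (elim \<xi>)
        have "0 < 1 + t*\<xi>" using elim \<open>0 < t\<close> by (simp add: add_pos_nonneg)
        hence "norm (t * (\<xi>^Suc j / (1 + t * \<xi>))) = t * (\<xi>^Suc j / (1 + t * \<xi>))" using elim \<open>0 < t\<close> by simp
        also have "\<dots> \<le> t * (\<xi>^j / t)"
          by (intro mult_left_mono bnd1) (use elim \<open>0 < t\<close> in auto)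
        also have "\<dots> = \<xi>^j" using \<open>0 < t\<close> by simp
        finally show ?case .
      qed
    qed
  qed
  thus ?thesis using eq by simp
qed

end


lemma E_id: "E n (\<lambda>x. x)"
proof -
  have "poly [:0,1:] = (\<lambda>x::real. x)" by (simp add: fun_eq_iff)
  thus ?thesis using E_poly[of n "[:0,1:]"] by simp
qed

lemma E_polysum: "E n (\<lambda>x. \<Sum>k<j. (-x)^k * c k)"
  by (intro E_sum E_mult E_pow E_neg E_const E_id)

lemma sign_sq: "(-1::real)^j * ((-x)^j * c) = x^j * c"
proof -
  have "(-1::real)^j * (-x)^j = x^j" by (simp add: power_mult_distrib[symmetric])
  thus ?thesis by (simp add: mult.assoc[symmetric])
qed

context
  fixes M :: "real measure"
  assumes P: "prob_space M" and S: "sets M = sets borel" and N: "AE x in M. 0 \<le> x"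
begin

lemma fatou_C:
  assumes i: "integrable M (\<lambda>\<xi>. \<xi>^j)" and b: "Ci M (Suc j) \<in> O[F0](\<lambda>_. 1)"
  shows "integrable M (\<lambda>\<xi>. \<xi>^Suc j)"
proof -
  from b obtain c where c: "c > 0" "eventually (\<lambda>x. norm (Ci M (Suc j) x) \<le> c * norm (1::real)) F0"
    by (elim landau_o.bigE)
  from c(2) have "\<exists>b>0. \<forall>y>0. y < b \<longrightarrow> norm (Ci M (Suc j) y) \<le> c * norm (1::real)"
    by (simp only: eventually_at_right_field)
  then obtain \<delta> where d0: "\<delta> > 0" and d1: "\<forall>y>0. y < \<delta> \<longrightarrow> norm (Ci M (Suc j) y) \<le> c * norm (1::real)"
    by blast
  have d: "\<delta> > 0" "\<And>y. 0 < y \<Longrightarrow> y < \<delta> \<Longrightarrow> norm (Ci M (Suc j) y) \<le> c"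
    using d0 d1 by auto
  define t where "t n = \<delta>/2 * inverse (real (Suc n))" for n
  have tpos: "0 < t n" for n using d by (simp add: t_def)
  have tlt: "t n < \<delta>" for n
  proof -
    have "inverse (real (Suc n)) \<le> 1" using inverse_le_1_iff[of "real (Suc n)"] by simp
    hence "t n \<le> \<delta>/2" using d unfolding t_def by (intro mult_left_le) simp_all
    thus ?thesis using d by simp
  qed
  have tlim: "t \<longlonglongrightarrow> 0"
    unfolding t_def using tendsto_mult[OF tendsto_const[of "\<delta>/2"] LIMSEQ_inverse_real_of_nat] by (simp only: mult_zero_right)
  define u where "u n \<xi> = ennreal (\<xi>^Suc j / (1 + t n * \<xi>))" for n \<xi>
  have um: "\<And>n. u n \<in> borel_measurable M"
    unfolding u_def by (intro measurable_compose[OF meas_frac[OF P S N]] measurable_ennreal)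
  have le: "integral\<^sup>N M (u n) \<le> ennreal c" for n
  proof -
    have "integral\<^sup>N M (u n) = ennreal (Ci M (Suc j) (t n))"
      unfolding u_def Ci_def
    proof (rule nn_integral_eq_integral)
      show "integrable M (\<lambda>\<xi>. \<xi>^Suc j / (1 + t n * \<xi>))" by (rule int_C[OF P S N tpos i])
      show "AE \<xi> in M. 0 \<le> \<xi>^Suc j / (1 + t n * \<xi>)"
        using N by eventually_elim (use tpos[of n] in simp)
    qed
    also have "\<dots> \<le> ennreal c" using d(2)[OF tpos tlt, of n] by (intro ennreal_leI) simp
    finally show ?thesis .
  qed
  have "(\<integral>\<^sup>+\<xi>. ennreal (norm (\<xi>^Suc j)) \<partial>M) = (\<integral>\<^sup>+\<xi>. liminf (\<lambda>n. u n \<xi>) \<partial>M)"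
  proof (rule nn_integral_cong_AE)
    show "AE \<xi> in M. ennreal (norm (\<xi>^Suc j)) = liminf (\<lambda>n. u n \<xi>)"
      using N
    proof eventually_elim
      case (elim \<xi>)
      have "(\<lambda>n. \<xi>^Suc j / (1 + t n * \<xi>)) \<longlonglongrightarrow> \<xi>^Suc j / (1 + 0 * \<xi>)"
        by (intro tendsto_intros tlim) simp
      hence "(\<lambda>n. u n \<xi>) \<longlonglongrightarrow> ennreal (\<xi>^Suc j)" unfolding u_def by (intro tendsto_ennrealI) simp
      hence "liminf (\<lambda>n. u n \<xi>) = ennreal (\<xi>^Suc j)" by (intro lim_imp_Liminf) simp_all
      thus ?case using elim by simp
    qed
  qed
  also have "\<dots> \<le> liminf (\<lambda>n. integral\<^sup>N M (u n))" by (rule nn_integral_liminf[OF um])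
  also have "\<dots> \<le> liminf (\<lambda>n. ennreal c)" by (rule Liminf_mono) (simp add: le)
  also have "\<dots> = ennreal c" by (simp add: Liminf_const)
  finally have le2: "(\<integral>\<^sup>+\<xi>. ennreal (norm (\<xi>^Suc j)) \<partial>M) \<le> ennreal c" .
  have "(\<integral>\<^sup>+\<xi>. ennreal (norm (\<xi>^Suc j)) \<partial>M) < \<infinity>" using order.strict_trans1[OF le2, of \<infinity>] by simp
  moreover have m: "(\<lambda>\<xi>. \<xi>^Suc j) \<in> borel_measurable M" by (rule meas_pow[OF P S N])
  ultimately show ?thesis unfolding integrable_iff_bounded by (intro conjI)
qed

lemma forward:
  assumes p: "1 \<le> p" and i: "integrable M (\<lambda>\<xi>. \<xi>^p)"
  shows "E (p-1) (Ci M 1)"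
proof -
  obtain n where n: "p = Suc n" using p by (cases p) auto
  have ik: "\<forall>k\<le>n. integrable M (\<lambda>\<xi>. \<xi>^k)" using int_pow_le[OF P S N i] n by auto
  have ev: "eventually (\<lambda>x. (\<Sum>k<n. (-x)^k * mom M (Suc k)) + (-1)^n * (x^n * mom M p)
      + (-1)^n * (x^n * (Ci M p x - mom M p)) = Ci M 1 x) F0"
    using eventually_at_right_less[of 0]
  proof eventually_elim
    case (elim x)
    show ?case using C_expand[OF P S N elim ik] n by (simp add: power_minus[of x n] algebra_simps)
  qed
  have E1: "E n (\<lambda>x. \<Sum>k<n. (-x)^k * mom M (Suc k))" by (rule E_polysum)
  have E2: "E n (\<lambda>x. (-1)^n * (x^n * mom M p))" by (intro E_mult E_const E_pow E_id)
  have "(\<lambda>x. Ci M p x - mom M p) \<in> o[F0](\<lambda>_. 1)"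
  proof (rule smalloI_tendsto)
    show "((\<lambda>x. (Ci M p x - mom M p) / 1) \<longlongrightarrow> 0) F0"
      using tendsto_diff[OF lim_Cp[OF P S N i] tendsto_const[of "mom M p"]] by simp
  qed simp
  from landau_o.small.mult_left[OF this, of "\<lambda>x. x^n"]
  have "(\<lambda>x. x^n * (Ci M p x - mom M p)) \<in> o[F0](\<lambda>x. x^n)" by simp
  hence E3: "E n (\<lambda>x. (-1)^n * (x^n * (Ci M p x - mom M p)))" by (intro E_small) simp
  have "E n (\<lambda>x. (\<Sum>k<n. (-x)^k * mom M (Suc k)) + (-1)^n * (x^n * mom M p)
      + (-1)^n * (x^n * (Ci M p x - mom M p)))" by (intro E_add E1 E2 E3)
  from E_cong[OF ev this] show ?thesis using n by simp
qed

lemma backward: "E n (Ci M 1) \<Longrightarrow> k \<le> Suc n \<Longrightarrow> integrable M (\<lambda>\<xi>. \<xi>^k)"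
proof (induction k rule: less_induct)
  case (less k)
  interpret prob_space M by (rule P)
  show ?case
  proof (cases k)
    case 0 thus ?thesis by simp
  next
    case (Suc j)
    have ik: "\<forall>i\<le>j. integrable M (\<lambda>\<xi>. \<xi>^i)" using less Suc by auto
    have Ej: "E j (Ci M 1)" using E_mono less.prems Suc by auto
    have "E j (\<lambda>x. Ci M 1 x - (\<Sum>k<j. (-x)^k * mom M (Suc k)))" by (intro E_diff Ej E_polysum)
    moreover have "eventually (\<lambda>x. Ci M 1 x - (\<Sum>k<j. (-x)^k * mom M (Suc k)) = (-x)^j * Ci M (Suc j) x) F0"
      using eventually_at_right_less[of 0]
    proof eventually_elim
      case (elim x)
      show ?case using C_expand[OF P S N elim ik] by simp
    qed
    ultimately have "E j (\<lambda>x. (-x)^j * Ci M (Suc j) x)" by (rule E_cong[rotated])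
    hence "E j (\<lambda>x. (-1)^j * ((-x)^j * Ci M (Suc j) x))" by (rule E_mult[OF E_const])
    hence EE: "E j (\<lambda>x. x^j * Ci M (Suc j) x)" by (simp only: sign_sq)
    have sm: "(\<lambda>x. x^j * Ci M (Suc j) x) \<in> o[F0](\<lambda>x. x^(j-1))" if "j > 0"
    proof -
      have "(\<lambda>x. x * Ci M (Suc j) x) \<in> o[F0](\<lambda>_. 1)"
      proof (rule smalloI_tendsto)
        show "((\<lambda>x. x * Ci M (Suc j) x / 1) \<longlongrightarrow> 0) F0"
          using lim_xC[OF P S N] ik by simp
      qed simp
      from landau_o.small.mult_left[OF this, of "\<lambda>x. x^(j-1)"]
      have "(\<lambda>x. x^(j-1) * (x * Ci M (Suc j) x)) \<in> o[F0](\<lambda>x. x^(j-1))" by simp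
      moreover have "(\<lambda>x. x^(j-1) * (x * Ci M (Suc j) x)) = (\<lambda>x. x^j * Ci M (Suc j) x)"
        using that by (cases j) (auto simp: fun_eq_iff algebra_simps)
      ultimately show ?thesis by simp
    qed
    have "Ci M (Suc j) \<in> O[F0](\<lambda>_. 1)" by (rule bound_from_E[OF EE sm])
    from fatou_C[OF _ this] ik Suc show ?thesis by simp
  qed
qed

end


lemma sum_reindex_r:
  fixes q :: "real poly"
  shows "(\<Sum>k=1..p. (-1)^k * ((-1)^k * coeff q (k-1)) * x^(k-1)) = (\<Sum>i<p. coeff q i * x^i)"
proof (cases p)
  case 0 thus ?thesis by simp
next
  case (Suc n)
  have "(\<Sum>k=1..p. (-1)^k * ((-1)^k * coeff q (k-1)) * x^(k-1)) = (\<Sum>k=1..p. coeff q (k-1) * x^(k-1))"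
  proof (rule sum.cong[OF refl])
    fix k
    have "(-1::real)^k * (-1)^k = 1" by (simp add: power_mult_distrib[symmetric])
    thus "(-1)^k * ((-1)^k * coeff q (k-1)) * x^(k-1) = coeff q (k-1) * x^(k-1)"
      by (simp add: mult.assoc[symmetric])
  qed
  also have "\<dots> = (\<Sum>i\<in>{0..n}. coeff q i * x^i)"
    using sum.atLeast_Suc_atMost_Suc_shift[of "\<lambda>k. coeff q (k-1) * x^(k-1)" 0 n] Suc by simp
  also have "\<dots> = (\<Sum>i<p. coeff q i * x^i)" using Suc by (simp add: atLeast0AtMost lessThan_Suc_atMost)
  finally show ?thesis .
qed

lemma E_iff_r:
  fixes F :: "real \<Rightarrow> real"
  shows "E n F \<longleftrightarrow> (\<exists>r::nat\<Rightarrow>real. (\<lambda>x. F x - (\<Sum>k=1..Suc n. (-1)^k * r k * x^(k-1))) \<in> o[F0](\<lambda>x. x^n))"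
proof
  assume "E n F"
  then obtain q where q: "(\<lambda>x. F x - poly q x) \<in> o[F0](\<lambda>x. x^n)" unfolding E_def by blast
  obtain s where s: "\<forall>x::real. poly q x = (\<Sum>i<Suc n. coeff q i * x^i) + x^Suc n * poly s x"
    using poly_shift by blast
  have sb: "poly s \<in> O[F0](\<lambda>_. 1)" by (rule E_bounded[OF E_poly])
  from landau_o.small_big_mult[OF pow_smallo_Suc[of n] sb]
  have t: "(\<lambda>x. x^Suc n * poly s x) \<in> o[F0](\<lambda>x. x^n)" by simp
  have "(\<lambda>x. (F x - poly q x) + x^Suc n * poly s x) \<in> o[F0](\<lambda>x. x^n)" by (rule sum_in_smallo(1)[OF q t])
  moreover have "(\<lambda>x. (F x - poly q x) + x^Suc n * poly s x) =
      (\<lambda>x. F x - (\<Sum>k=1..Suc n. (-1)^k * ((-1)^k * coeff q (k-1)) * x^(k-1)))"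
  proof (rule ext)
    fix x :: real
    show "(F x - poly q x) + x^Suc n * poly s x = F x - (\<Sum>k=1..Suc n. (-1)^k * ((-1)^k * coeff q (k-1)) * x^(k-1))"
      by (simp only: sum_reindex_r s[rule_format])
  qed
  ultimately show "\<exists>r::nat\<Rightarrow>real. (\<lambda>x. F x - (\<Sum>k=1..Suc n. (-1)^k * r k * x^(k-1))) \<in> o[F0](\<lambda>x. x^n)"
    by (intro exI[of _ "\<lambda>k. (-1)^k * coeff q (k-1)"]) simp
next
  assume "\<exists>r::nat\<Rightarrow>real. (\<lambda>x. F x - (\<Sum>k=1..Suc n. (-1)^k * r k * x^(k-1))) \<in> o[F0](\<lambda>x. x^n)"
  then obtain r :: "nat \<Rightarrow> real" where r: "(\<lambda>x. F x - (\<Sum>k=1..Suc n. (-1)^k * r k * x^(k-1))) \<in> o[F0](\<lambda>x. x^n)" by blast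
  have "E n (\<lambda>x. (F x - (\<Sum>k=1..Suc n. (-1)^k * r k * x^(k-1))) + (\<Sum>k=1..Suc n. (-1)^k * r k * x^(k-1)))"
    by (intro E_add E_small[OF r] E_sum E_mult E_const E_pow E_id)
  thus "E n F" by simp
qed

context
  fixes M :: "real measure"
  assumes P: "prob_space M" and S: "sets M = sets borel" and N: "AE x in M. 0 \<le> x"
begin

lemma moment_iff: "moment M p < \<infinity> \<longleftrightarrow> integrable M (\<lambda>\<xi>. \<xi>^p)"
proof -
  have "(\<integral>\<^sup>+\<xi>. ennreal (norm (\<xi>^p)) \<partial>M) = moment M p"
    unfolding moment_def by (rule nn_integral_cong_AE) (use N in \<open>eventually_elim, simp\<close>)
  thus ?thesis using meas_pow[OF P S N] by (simp add: integrable_iff_bounded)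
qed

lemma xC_lt1: "0 < x \<Longrightarrow> x * Ci M 1 x < 1"
proof -
  assume x: "0 < x"
  interpret prob_space M by (rule P)
  have i1: "integrable M (\<lambda>\<xi>. \<xi>^Suc 0 / (1 + x*\<xi>))" by (rule int_C[OF P S N x]) simp
  define g where "g \<xi> = 1 - x * (\<xi>^Suc 0 / (1 + x*\<xi>))" for \<xi>
  have gi: "integrable M g" unfolding g_def
    by (intro Bochner_Integration.integrable_diff integrable_mult_right i1) simp
  have "integral\<^sup>L M g = (\<integral>\<xi>. 1 \<partial>M) - (\<integral>\<xi>. x * (\<xi>^Suc 0 / (1 + x*\<xi>)) \<partial>M)"
    unfolding g_def by (rule Bochner_Integration.integral_diff[OF _ integrable_mult_right[OF i1]]) simp
  also have "\<dots> = 1 - x * Ci M 1 x"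
    unfolding Ci_def by (simp only: integral_mult_right_zero) (simp add: prob_space)
  finally have gint: "integral\<^sup>L M g = 1 - x * Ci M 1 x" .
  have gpos: "AE \<xi> in M. 0 < g \<xi>" using N
  proof eventually_elim
    case (elim \<xi>)
    have pos: "0 < 1 + x*\<xi>" using elim x by (simp add: add_pos_nonneg)
    hence "g \<xi> = 1 / (1 + x*\<xi>)" unfolding g_def by (simp add: field_simps)
    thus ?case using pos by simp
  qed
  have "0 \<le> integral\<^sup>L M g" by (rule integral_nonneg_AE) (use gpos in \<open>eventually_elim, simp\<close>)
  moreover have "integral\<^sup>L M g \<noteq> 0"
  proof
    assume "integral\<^sup>L M g = 0"
    moreover have gnn: "AE \<xi> in M. 0 \<le> g \<xi>" using gpos by eventually_elim simp
    ultimately have "AE \<xi> in M. g \<xi> = 0"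
      using integral_nonneg_eq_0_iff_AE[OF gi gnn] by simp
    with gpos have "AE \<xi> in M. False" by eventually_elim simp
    thus False by simp
  qed
  ultimately show ?thesis using gint by simp
qed

lemma K_eq: "0 < x \<Longrightarrow> complex_of_real (1 / x) * K_mu M (- complex_of_real x)
   = complex_of_real (- Ci M 1 x / (1 - x * Ci M 1 x))"
proof -
  assume x: "0 < x"
  have pt: "(- complex_of_real x) * complex_of_real \<xi> / (1 - (- complex_of_real x) * complex_of_real \<xi>)
     = complex_of_real (- (x * (\<xi>^1 / (1 + x*\<xi>))))" for \<xi>
  proof -
    have "complex_of_real (- (x * (\<xi>^1 / (1 + x*\<xi>)))) = - (complex_of_real x * (complex_of_real \<xi> / (1 + complex_of_real x * complex_of_real \<xi>)))"
      by (simp only: of_real_minus of_real_mult of_real_divide of_real_add of_real_1 power_one_right)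
    also have "\<dots> = (- complex_of_real x) * complex_of_real \<xi> / (1 - (- complex_of_real x) * complex_of_real \<xi>)"
      by (simp only: mult_minus_left diff_minus_eq_add minus_minus times_divide_eq_right minus_divide_left)
    finally show ?thesis by (rule sym)
  qed
  define A where "A = Ci M 1 x"
  have psi: "psi_mu M (- complex_of_real x) = complex_of_real (- (x * A))"
    unfolding psi_mu_def Ci_def A_def pt integral_complex_of_real
    by (simp only: integral_minus integral_mult_right_zero)
  have ne: "1 - x * A \<noteq> 0" using xC_lt1[OF x] unfolding A_def by simp
  have one: "1 + complex_of_real (- (x * A)) = complex_of_real (1 + - (x * A))" by simp
  have K: "K_mu M (- complex_of_real x) = complex_of_real (- (x * A) / (1 + - (x * A)))"
    unfolding K_mu_def psi one by (rule of_real_divide[symmetric])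
  have r: "1 / x * (- (x * A) / (1 + - (x * A))) = - A / (1 - x * A)"
    using x ne by (simp add: field_simps)
  show ?thesis unfolding K A_def[symmetric] r[symmetric] by (rule of_real_mult[symmetric])
qed

lemma EF_iff: "E n (\<lambda>x. - Ci M 1 x / (1 - x * Ci M 1 x)) \<longleftrightarrow> E n (Ci M 1)"
proof
  assume "E n (Ci M 1)"
  from E_transform[OF this] show "E n (\<lambda>x. - Ci M 1 x / (1 - x * Ci M 1 x))" .
next
  assume a: "E n (\<lambda>x. - Ci M 1 x / (1 - x * Ci M 1 x))"
  have "eventually (\<lambda>x. - (- Ci M 1 x / (1 - x * Ci M 1 x)) / (1 - x * (- Ci M 1 x / (1 - x * Ci M 1 x))) = Ci M 1 x) F0"
    using eventually_at_right_less[of 0]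
  proof eventually_elim
    case (elim x)
    have ne: "1 - x * Ci M 1 x \<noteq> 0" using xC_lt1[OF elim] by simp
    thus ?case by (simp add: field_simps)
  qed
  from E_cong[OF this E_transform[OF a]] show "E n (Ci M 1)" .
qed

end

theorem proposition4p1:
  fixes M :: "real measure" and p :: nat
  assumes "prob_space M"
    and "sets M = sets borel"
    and "AE x in M. 0 \<le> x"
    and "measure M {0} < 1"
    and "p \<ge> 1"
  shows "moment M p < \<infinity> \<longleftrightarrow>
    (\<exists>r :: nat \<Rightarrow> real.
       (\<lambda>x::real. complex_of_real (1 / x) * K_mu M (- complex_of_real x)
          - (\<Sum>k=1..p. complex_of_real ((-1) ^ k * r k * x ^ (k - 1))))
       \<in> o[at_right 0](\<lambda>x. complex_of_real (x ^ (p - 1))))"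
proof -
  note P = assms(1) and S = assms(2) and N = assms(3)
  obtain n where n: "p = Suc n" using assms(5) by (cases p) auto
  define F where "F x = - Ci M 1 x / (1 - x * Ci M 1 x)" for x
  have "moment M p < \<infinity> \<longleftrightarrow> integrable M (\<lambda>\<xi>. \<xi>^p)" by (rule moment_iff[OF P S N])
  also have "\<dots> \<longleftrightarrow> E n (Ci M 1)"
    using forward[OF P S N assms(5)] backward[OF P S N, of n p] n by auto
  also have "\<dots> \<longleftrightarrow> E n F" unfolding F_def by (rule EF_iff[OF P S N, symmetric])
  also have "\<dots> \<longleftrightarrow> (\<exists>r::nat\<Rightarrow>real. (\<lambda>x. F x - (\<Sum>k=1..Suc n. (-1)^k * r k * x^(k-1))) \<in> o[F0](\<lambda>x. x^n))"
    by (rule E_iff_r)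
  also have "\<dots> \<longleftrightarrow> (\<exists>r :: nat \<Rightarrow> real.
       (\<lambda>x::real. complex_of_real (1 / x) * K_mu M (- complex_of_real x)
          - (\<Sum>k=1..p. complex_of_real ((-1) ^ k * r k * x ^ (k - 1))))
       \<in> o[at_right 0](\<lambda>x. complex_of_real (x ^ (p - 1))))"
  proof (intro ex_cong1)
    fix r :: "nat \<Rightarrow> real"
    have ev: "eventually (\<lambda>x. complex_of_real (1 / x) * K_mu M (- complex_of_real x)
          - (\<Sum>k=1..p. complex_of_real ((-1) ^ k * r k * x ^ (k - 1)))
       = complex_of_real (F x - (\<Sum>k=1..Suc n. (-1)^k * r k * x^(k-1)))) F0"
      using eventually_at_right_less[of 0]
    proof eventually_elim
      case (elim x)
      show ?case using K_eq[OF P S N elim] n by (simp add: F_def)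
    qed
    have "(\<lambda>x. complex_of_real (F x - (\<Sum>k=1..Suc n. (-1)^k * r k * x^(k-1)))) \<in> o[F0](\<lambda>x. complex_of_real (x ^ (p - 1)))
       \<longleftrightarrow> (\<lambda>x. F x - (\<Sum>k=1..Suc n. (-1)^k * r k * x^(k-1))) \<in> o[F0](\<lambda>x. x^n)"
      using n by (simp only: landau_o.small.of_real_iff) simp
    thus "(\<lambda>x. F x - (\<Sum>k=1..Suc n. (-1)^k * r k * x^(k-1))) \<in> o[F0](\<lambda>x. x^n) \<longleftrightarrow>
      (\<lambda>x. complex_of_real (1 / x) * K_mu M (- complex_of_real x)
          - (\<Sum>k=1..p. complex_of_real ((-1) ^ k * r k * x ^ (k - 1))))
       \<in> o[at_right 0](\<lambda>x. complex_of_real (x ^ (p - 1)))"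
      using landau_o.small.in_cong[OF ev] by simp
  qed
  finally show ?thesis .
qed


end
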